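(* Let $M$ be a loopless binary matroid on an $n$-element ground set $S$, of rank $r$. 1. If $S$ is colored with exactly $r$ colors (every color being used) and $M$ has no rainbow colored circuit, then one of the color classes is a cut of $M$. 2. If $S$ is colored with exactly $n-r$ colors (every color being used) and $M$ has no rainbow colored cut, then one of the color classes is a circuit of $M$.
   Context: A coloring of $S$ is a partition of $S$ into nonempty color classes. A subset is rainbow colored if no two of its elements have the same color. A cut of a matroid is an inclusionwise minimal subset of the ground set intersecting every basis (equivalently, a circuit of the dual matroid). A matroid is binary if it is representable over $GF(2)$. *)

theory Defs
  imports Main "HOL-Library.Z2" "HOL-Library.Disjoint_Sets"
begin

definition matroid :: "'a set \<Rightarrow> ('a set \<Rightarrow> bool) \<Rightarrow> bool" where
  "matroid S indep \<longleftrightarrow> finite S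
     \<and> (\<forall>X. indep X \<longrightarrow> X \<subseteq> S)
     \<and> indep {}
     \<and> (\<forall>X Y. indep X \<and> Y \<subseteq> X \<longrightarrow> indep Y)
     \<and> (\<forall>X Y. indep X \<and> indep Y \<and> card X < card Y \<longrightarrow>
            (\<exists>y\<in>Y - X. indep (insert y X)))"

definition gf2_lin_indep :: "('a \<Rightarrow> nat \<Rightarrow> bit) \<Rightarrow> 'a set \<Rightarrow> bool" where
  "gf2_lin_indep v X \<longleftrightarrow>
     (\<forall>a :: 'a \<Rightarrow> bit. (\<forall>i. (\<Sum>x\<in>X. a x * v x i) = 0) \<longrightarrow> (\<forall>x\<in>X. a x = 0))"

definition binary_matroid :: "'a set \<Rightarrow> ('a set \<Rightarrow> bool) \<Rightarrow> bool" where
  "binary_matroid S indep \<longleftrightarrow> matroid S indep \<and>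
     (\<exists>v :: 'a \<Rightarrow> nat \<Rightarrow> bit. \<forall>X. X \<subseteq> S \<longrightarrow> (indep X \<longleftrightarrow> gf2_lin_indep v X))"

definition basis :: "'a set \<Rightarrow> ('a set \<Rightarrow> bool) \<Rightarrow> 'a set \<Rightarrow> bool" where
  "basis S indep B \<longleftrightarrow> indep B \<and> (\<forall>X. indep X \<and> B \<subseteq> X \<longrightarrow> X = B)"

definition matroid_rank :: "'a set \<Rightarrow> ('a set \<Rightarrow> bool) \<Rightarrow> nat" where
  "matroid_rank S indep = Max (card ` {X. indep X})"

definition circuit :: "'a set \<Rightarrow> ('a set \<Rightarrow> bool) \<Rightarrow> 'a set \<Rightarrow> bool" where
  "circuit S indep C \<longleftrightarrow> C \<subseteq> S \<and> \<not> indep C \<and> (\<forall>D. D \<subset> C \<longrightarrow> indep D)"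

definition cut :: "'a set \<Rightarrow> ('a set \<Rightarrow> bool) \<Rightarrow> 'a set \<Rightarrow> bool" where
  "cut S indep K \<longleftrightarrow> K \<subseteq> S \<and> (\<forall>B. basis S indep B \<longrightarrow> K \<inter> B \<noteq> {})
     \<and> (\<forall>K'. K' \<subset> K \<longrightarrow> (\<exists>B. basis S indep B \<and> K' \<inter> B = {}))"

definition loopless :: "'a set \<Rightarrow> ('a set \<Rightarrow> bool) \<Rightarrow> bool" where
  "loopless S indep \<longleftrightarrow> (\<forall>x\<in>S. indep {x})"

text \<open>A coloring is a partition of S into nonempty color classes;
  a set is rainbow if it meets each color class in at most one element.\<close>
definition rainbow :: "'a set set \<Rightarrow> 'a set \<Rightarrow> bool" where
  "rainbow P X \<longleftrightarrow> (\<forall>A\<in>P. card (X \<inter> A) \<le> 1)"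

end

theory Submission
  imports Defs
begin


lemma bit_add_self[simp]: "(x::bit) + x = 0"
  by (cases x) simp_all

lemma bit_eq_of_add: "(p::bit) + q = 0 \<Longrightarrow> p = q"
  by (cases p; cases q) simp_all

definition HH :: "'k set \<Rightarrow> ('k \<Rightarrow> 'e set) \<Rightarrow> ('e \<Rightarrow> 'k \<Rightarrow> bit) \<Rightarrow> bool" where
  "HH K E c \<longleftrightarrow> (\<forall>y. (\<forall>A\<in>K. y A \<in> E A) \<longrightarrow>
      (\<forall>J. J \<subseteq> K \<and> J \<noteq> {} \<longrightarrow> (\<exists>k\<in>K. (\<Sum>A\<in>J. c (y A) k) \<noteq> 0)))"

lemma HHD: "HH K E c \<Longrightarrow> \<forall>A\<in>K. y A \<in> E A \<Longrightarrow> J \<subseteq> K \<Longrightarrow> J \<noteq> {}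
   \<Longrightarrow> \<exists>k\<in>K. (\<Sum>A\<in>J. c (y A) k) \<noteq> 0"
  unfolding HH_def by blast

lemma abs_diag:
  assumes fin: "finite K" and t: "\<forall>A\<in>K. t A \<in> E A"
    and ct: "\<forall>A\<in>K. \<forall>k\<in>K. c (t A) k = (if k = A then 1 else 0)"
    and H: "HH K E c" and A: "A \<in> K" and x: "x \<in> E A"
  shows "c x A = 1"
proof (rule ccontr)
  assume "c x A \<noteq> 1"
  hence cx: "c x A = 0" by simp
  define y where "y = t(A := x)"
  define J where "J = insert A {B\<in>K-{A}. c x B = 1}"
  have y: "\<forall>B\<in>K. y B \<in> E B" using t x by (simp add: y_def)
  have J: "J \<subseteq> K" "J \<noteq> {}" using A by (auto simp: J_def)
  from H y J obtain k where k: "k \<in> K" "(\<Sum>B\<in>J. c (y B) k) \<noteq> 0"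
    unfolding HH_def by blast
  have fJ: "finite J" using J fin finite_subset by blast
  have "(\<Sum>B\<in>J. c (y B) k) = c (y A) k + (\<Sum>B\<in>J-{A}. c (y B) k)"
    using fJ by (simp add: J_def sum.remove)
  also have "(\<Sum>B\<in>J-{A}. c (y B) k) = (\<Sum>B\<in>J-{A}. if B = k then 1 else 0)"
    apply (rule sum.cong[OF refl]) using ct k(1) by (auto simp: y_def J_def)
  also have "\<dots> = (if k \<in> J - {A} then 1 else 0)"
    using fJ by (simp add: sum.delta')
  finally have "c x k + (if k \<in> J - {A} then 1 else 0) \<noteq> 0"
    using k by (simp add: y_def)
  thus False using cx k(1) by (cases "k = A") (auto simp: J_def)
qed

lemma abs_restrict:
  assumes fin: "finite K" and t: "\<forall>A\<in>K. t A \<in> E A"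
    and ct: "\<forall>A\<in>K. \<forall>k\<in>K. c (t A) k = (if k = A then 1 else 0)"
    and H: "HH K E c" and m: "m \<in> K"
  shows "HH (K - {m}) E c"
  unfolding HH_def
proof (intro allI impI)
  fix y J assume y: "\<forall>A\<in>K - {m}. y A \<in> E A" and J: "J \<subseteq> K - {m} \<and> J \<noteq> {}"
  show "\<exists>k\<in>K - {m}. (\<Sum>A\<in>J. c (y A) k) \<noteq> 0"
  proof (rule ccontr)
    assume nz: "\<not> ?thesis"
    define y' where "y' = y(m := t m)"
    have y': "\<forall>A\<in>K. y' A \<in> E A" using y t m by (auto simp: y'_def)
    have fJ: "finite J" using J fin finite_subset by blast
    have eq: "(\<Sum>A\<in>J. c (y' A) k) = (\<Sum>A\<in>J. c (y A) k)" for k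
      apply (rule sum.cong[OF refl]) using J by (auto simp: y'_def)
    from H y' J obtain k where k: "k \<in> K" "(\<Sum>A\<in>J. c (y' A) k) \<noteq> 0"
      unfolding HH_def by blast
    have km: "k = m"
    proof (rule ccontr)
      assume "k \<noteq> m"
      hence "k \<in> K - {m}" using k by simp
      with nz have "(\<Sum>A\<in>J. c (y A) k) = 0" by blast
      with k eq show False by simp
    qed
    with k eq have s1: "(\<Sum>A\<in>J. c (y A) m) = 1" by simp
    have "insert m J \<subseteq> K" using J m by auto
    from HHD[OF H y' this] obtain k' where k': "k' \<in> K" "(\<Sum>A\<in>insert m J. c (y' A) k') \<noteq> 0"
      by blast
    have "m \<notin> J" using J by auto
    hence "(\<Sum>A\<in>insert m J. c (y' A) k') = c (t m) k' + (\<Sum>A\<in>J. c (y A) k')"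
      using fJ eq by (simp add: y'_def)
    with k' ct m have "(if k' = m then 1 else 0) + (\<Sum>A\<in>J. c (y A) k') \<noteq> 0" by simp
    thus False using s1 nz k'(1) by (cases "k' = m") auto
  qed
qed

lemma abs_main:
  assumes fin: "finite K" and ne: "K \<noteq> {}" and t: "\<forall>A\<in>K. t A \<in> E A"
    and ct: "\<forall>A\<in>K. \<forall>k\<in>K. c (t A) k = (if k = A then 1 else 0)"
    and H: "HH K E c"
  shows "\<exists>i\<in>K. \<forall>j\<in>K-{i}. \<forall>x\<in>E j. c x i = 0"
  using assms
proof (induction "card K" arbitrary: K rule: less_induct)
  case less
  show ?case
  proof (cases "card K = 1")
    case True
    then obtain i where "K = {i}" using card_1_singletonE by blast
    thus ?thesis by auto
  next
    case False
    have "card K \<noteq> 0" using less.prems(1,2) by simp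
    with False have c2: "card K \<ge> 2" by linarith
    have IH: "\<forall>m\<in>K. \<exists>s\<in>K-{m}. \<forall>j\<in>K-{m}-{s}. \<forall>x\<in>E j. c x s = 0"
    proof
      fix m assume m: "m \<in> K"
      have "K - {m} \<noteq> {}"
      proof
        assume "K - {m} = {}"
        hence "K = {m}" using m by auto
        thus False using c2 by simp
      qed
      moreover have "card (K - {m}) < card K" using m less.prems(1) c2 by simp
      ultimately show "\<exists>s\<in>K-{m}. \<forall>j\<in>K-{m}-{s}. \<forall>x\<in>E j. c x s = 0"
        using less.hyps[of "K - {m}"] less.prems abs_restrict[OF less.prems(1,3,4,5) m] by auto
    qed
    show ?thesis
    proof (rule ccontr)
      assume nos: "\<not> ?thesis"
      obtain s where s: "\<forall>m\<in>K. s m \<in> K - {m} \<and> (\<forall>j\<in>K-{m}-{s m}. \<forall>x\<in>E j. c x (s m) = 0)"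
        using IH by metis
      have edge: "\<forall>m\<in>K. \<exists>x\<in>E m. c x (s m) = 1"
      proof
        fix m assume m: "m \<in> K"
        from nos s m obtain j x where "j \<in> K - {s m}" "x \<in> E j" "c x (s m) \<noteq> 0" by blast
        with s m show "\<exists>x\<in>E m. c x (s m) = 1" by (cases "j = m") auto
      qed
      have inj: "inj_on s K"
      proof (rule inj_onI)
        fix m m' assume mm: "m \<in> K" "m' \<in> K" "s m = s m'"
        from edge mm obtain x where x: "x \<in> E m" "c x (s m) = 1" by blast
        show "m = m'"
        proof (rule ccontr)
          assume "m \<noteq> m'"
          hence "m \<in> K - {m'} - {s m'}" using mm s by auto
          with s mm x show False by auto
        qed
      qed
      have sK: "s ` K = K"
        using s by (intro endo_inj_surj[OF less.prems(1) _ inj]) auto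
      obtain y where y: "\<forall>m\<in>K. y m \<in> E m \<and> c (y m) (s m) = 1" using edge by metis
      have "\<exists>k\<in>K. (\<Sum>A\<in>K. c (y A) k) \<noteq> 0"
        using less.prems(5) y less.prems(2) unfolding HH_def by blast
      then obtain k where k: "k \<in> K" "(\<Sum>A\<in>K. c (y A) k) \<noteq> 0" by blast
      from k sK obtain m0 where m0: "m0 \<in> K" "k = s m0" by blast
      have km: "k \<noteq> m0" using s m0 by auto
      have d: "c (y k) k = 1"
        using abs_diag[OF less.prems(1,3,4,5) k(1)] y k by auto
      have "(\<Sum>A\<in>K. c (y A) k) = c (y k) k + (\<Sum>A\<in>K-{k}. c (y A) k)"
        using k less.prems(1) by (intro sum.remove) auto
      also have "(\<Sum>A\<in>K-{k}. c (y A) k) = c (y m0) k + (\<Sum>A\<in>K-{k}-{m0}. c (y A) k)"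
        using m0 km less.prems(1) by (intro sum.remove) auto
      also have "(\<Sum>A\<in>K-{k}-{m0}. c (y A) k) = 0"
        apply (rule sum.neutral) using s m0 y by auto
      finally show False using d y m0 k by simp
    qed
  qed
qed



declare add_bit_eq_xor[simp del] mult_bit_eq_and[simp del]

lemma sum_ind: "finite T \<Longrightarrow> x \<in> T \<Longrightarrow> (\<Sum>y\<in>T. (if y = x then 1 else 0) * w y) = (w x :: bit)"
proof -
  assume a: "finite T" "x \<in> T"
  have "(\<Sum>y\<in>T. (if y = x then 1 else 0) * w y) = (\<Sum>y\<in>T. if y = x then w y else 0)"
    by (rule sum.cong) auto
  thus ?thesis using a by simp
qed

lemma indep_sub: "matroid S indep \<Longrightarrow> indep X \<Longrightarrow> X \<subseteq> S"
  by (simp add: matroid_def)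

lemma indep_finite: "matroid S indep \<Longrightarrow> indep X \<Longrightarrow> finite X"
  using indep_sub finite_subset by (metis matroid_def)

lemma indep_mono: "matroid S indep \<Longrightarrow> indep X \<Longrightarrow> Y \<subseteq> X \<Longrightarrow> indep Y"
  by (simp add: matroid_def)

lemma indep_empty: "matroid S indep \<Longrightarrow> indep {}"
  by (simp add: matroid_def)

lemma augment: "matroid S indep \<Longrightarrow> indep X \<Longrightarrow> indep Y \<Longrightarrow> card X < card Y
   \<Longrightarrow> \<exists>y\<in>Y - X. indep (insert y X)"
  unfolding matroid_def by blast

lemma fin_indeps: "matroid S indep \<Longrightarrow> finite {X. indep X}"
proof -
  assume M: "matroid S indep"
  have "{X. indep X} \<subseteq> Pow S" using indep_sub[OF M] by auto
  moreover have "finite S" using M by (simp add: matroid_def)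
  ultimately show ?thesis using finite_subset by blast
qed

lemma indep_card_le: "matroid S indep \<Longrightarrow> indep X \<Longrightarrow> card X \<le> matroid_rank S indep"
  unfolding matroid_rank_def
  by (rule Max_ge) (auto simp: fin_indeps)

lemma rank_attained: "matroid S indep \<Longrightarrow> \<exists>X. indep X \<and> card X = matroid_rank S indep"
proof -
  assume M: "matroid S indep"
  have "matroid_rank S indep \<in> card ` {X. indep X}"
    unfolding matroid_rank_def
    using fin_indeps[OF M] indep_empty[OF M] by (intro Max_in) auto
  thus ?thesis by auto
qed

lemma basis_iff: "matroid S indep \<Longrightarrow>
   basis S indep B \<longleftrightarrow> indep B \<and> card B = matroid_rank S indep"
proof
  assume M: "matroid S indep" and b: "basis S indep B"
  hence iB: "indep B" by (simp add: basis_def)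
  have le: "card B \<le> matroid_rank S indep" using indep_card_le[OF M iB] .
  show "indep B \<and> card B = matroid_rank S indep"
  proof (rule ccontr)
    assume "\<not> ?thesis"
    with le iB have lt: "card B < matroid_rank S indep" by auto
    obtain X where X: "indep X" "card X = matroid_rank S indep" using rank_attained[OF M] by blast
    from augment[OF M iB X(1)] lt X obtain y where y: "y \<in> X - B" "indep (insert y B)" by auto
    with b have "insert y B = B" unfolding basis_def by blast
    with y show False by auto
  qed
next
  assume M: "matroid S indep" and h: "indep B \<and> card B = matroid_rank S indep"
  show "basis S indep B" unfolding basis_def
  proof (intro conjI allI impI)
    show "indep B" using h by simp
    fix X assume X: "indep X \<and> B \<subseteq> X"
    have "card X \<le> card B" using indep_card_le[OF M] X h by auto
    thus "X = B" using X indep_finite[OF M] card_seteq by metis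
  qed
qed

lemma dep_has_circuit:
  "matroid S indep \<Longrightarrow> X \<subseteq> S \<Longrightarrow> \<not> indep X \<Longrightarrow> \<exists>C\<subseteq>X. circuit S indep C"
proof (induction "card X" arbitrary: X rule: less_induct)
  case less
  show ?case
  proof (cases "\<forall>D. D \<subset> X \<longrightarrow> indep D")
    case True
    thus ?thesis using less.prems unfolding circuit_def by blast
  next
    case False
    then obtain D where D: "D \<subset> X" "\<not> indep D" by blast
    have "finite X" using less.prems(1,2) finite_subset by (metis matroid_def)
    hence "card D < card X" using D psubset_card_mono by blast
    with less.hyps[of D] less.prems D show ?thesis by blast
  qed
qed

lemma meets_has_cut:
  "matroid S indep \<Longrightarrow> X \<subseteq> S \<Longrightarrow> \<forall>B. basis S indep B \<longrightarrow> X \<inter> B \<noteq> {}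
   \<Longrightarrow> \<exists>K\<subseteq>X. cut S indep K"
proof (induction "card X" arbitrary: X rule: less_induct)
  case less
  show ?case
  proof (cases "\<forall>K'. K' \<subset> X \<longrightarrow> (\<exists>B. basis S indep B \<and> K' \<inter> B = {})")
    case True
    thus ?thesis using less.prems unfolding cut_def by blast
  next
    case False
    then obtain D where D: "D \<subset> X" "\<forall>B. basis S indep B \<longrightarrow> D \<inter> B \<noteq> {}" by blast
    have "finite X" using less.prems(1,2) finite_subset by (metis matroid_def)
    hence "card D < card X" using D psubset_card_mono by blast
    with less.hyps[of D] less.prems D show ?thesis by blast
  qed
qed

lemma rainbow_mono: "rainbow P X \<Longrightarrow> Y \<subseteq> X \<Longrightarrow> finite X \<Longrightarrow> rainbow P Y"
  unfolding rainbow_def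
proof
  fix A assume r: "\<forall>A\<in>P. card (X \<inter> A) \<le> 1" and Y: "Y \<subseteq> X" "finite X" and A: "A \<in> P"
  have "card (Y \<inter> A) \<le> card (X \<inter> A)" using Y by (intro card_mono) auto
  thus "card (Y \<inter> A) \<le> 1" using r A by (meson le_trans)
qed

lemma class_unique: "partition_on S P \<Longrightarrow> A \<in> P \<Longrightarrow> B \<in> P \<Longrightarrow> x \<in> A \<Longrightarrow> x \<in> B \<Longrightarrow> A = B"
  unfolding partition_on_def disjoint_def by blast

lemma rainbow_image: "partition_on S P \<Longrightarrow> J \<subseteq> P \<Longrightarrow> \<forall>A\<in>J. y A \<in> A \<Longrightarrow> rainbow P (y ` J)"
  unfolding rainbow_def
proof
  fix A' assume P: "partition_on S P" and J: "J \<subseteq> P" and y: "\<forall>A\<in>J. y A \<in> A" and A': "A' \<in> P"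
  have "y ` J \<inter> A' \<subseteq> {y A'}"
  proof
    fix w assume "w \<in> y ` J \<inter> A'"
    then obtain A where A: "A \<in> J" "w = y A" "w \<in> A'" by auto
    have "A = A'" using class_unique[OF P, of A A' w] A J y A' by auto
    thus "w \<in> {y A'}" using A by simp
  qed
  hence "card (y ` J \<inter> A') \<le> card {y A'}" by (intro card_mono) auto
  thus "card (y ` J \<inter> A') \<le> 1" by simp
qed

lemma inj_image: "partition_on S P \<Longrightarrow> J \<subseteq> P \<Longrightarrow> \<forall>A\<in>J. y A \<in> A \<Longrightarrow> inj_on y J"
  by (rule inj_onI) (metis class_unique subsetD)

lemma gf2_spanned:
  assumes g: "gf2_lin_indep v B" and fin: "finite B" and x: "x \<notin> B"
    and ng: "\<not> gf2_lin_indep v (insert x B)"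
  shows "\<exists>a. \<forall>i. v x i = (\<Sum>b\<in>B. a b * v b i)"
proof -
  from ng obtain a where a: "\<forall>i. (\<Sum>y\<in>insert x B. a y * v y i) = 0" "\<exists>y\<in>insert x B. a y \<noteq> 0"
    unfolding gf2_lin_indep_def by blast
  have eq: "(\<Sum>y\<in>insert x B. a y * v y i) = a x * v x i + (\<Sum>y\<in>B. a y * v y i)" for i
    using fin x by simp
  have ax: "a x = 1"
  proof (rule ccontr)
    assume "a x \<noteq> 1"
    hence "a x = 0" by simp
    hence "\<forall>i. (\<Sum>y\<in>B. a y * v y i) = 0" using a(1) eq by simp
    with g have "\<forall>y\<in>B. a y = 0" unfolding gf2_lin_indep_def by blast
    with a(2) \<open>a x = 0\<close> show False by auto
  qed
  have "\<forall>i. v x i = (\<Sum>b\<in>B. a b * v b i)"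
    using a(1) eq ax by (auto intro: bit_eq_of_add)
  thus ?thesis by blast
qed

lemma gf2_not_rep:
  assumes g: "gf2_lin_indep v (insert y (h ` Q))" and y: "y \<notin> h ` Q" and inj: "inj_on h Q"
    and fin: "finite Q" and r: "\<forall>i. v y i = (\<Sum>k\<in>Q. b k * v (h k) i)"
  shows False
proof -
  define a where "a z = (if z = y then 1 else b (the_inv_into Q h z))" for z
  have "(\<Sum>z\<in>insert y (h ` Q). a z * v z i) = 0" for i
  proof -
    have "(\<Sum>z\<in>insert y (h ` Q). a z * v z i) = a y * v y i + (\<Sum>z\<in>h ` Q. a z * v z i)"
      using fin y by simp
    also have "(\<Sum>z\<in>h ` Q. a z * v z i) = (\<Sum>k\<in>Q. a (h k) * v (h k) i)"
      using sum.reindex[OF inj] by simp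
    also have "\<dots> = (\<Sum>k\<in>Q. b k * v (h k) i)"
      apply (rule sum.cong[OF refl])
      using y inj by (auto simp: a_def the_inv_into_f_f)
    finally show ?thesis using r by (simp add: a_def)
  qed
  with g have "a y = 0" unfolding gf2_lin_indep_def by blast
  thus False by (simp add: a_def)
qed



lemma part_basics:
  assumes S: "finite S" and P: "partition_on S P"
  shows "finite P" "\<forall>A\<in>P. A \<subseteq> S \<and> A \<noteq> {}" "\<forall>x\<in>S. \<exists>A\<in>P. x \<in> A"
proof -
  have "P \<subseteq> Pow S" using P unfolding partition_on_def by auto
  thus "finite P" using S finite_subset by blast
  show "\<forall>A\<in>P. A \<subseteq> S \<and> A \<noteq> {}" using P unfolding partition_on_def by auto
  show "\<forall>x\<in>S. \<exists>A\<in>P. x \<in> A" using P unfolding partition_on_def by auto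
qed

lemma part1:
  assumes M: "matroid S indep" and v: "\<forall>X. X \<subseteq> S \<longrightarrow> (indep X \<longleftrightarrow> gf2_lin_indep v X)"
    and S: "finite S" "S \<noteq> {}"
    and P: "partition_on S P" and cP: "card P = matroid_rank S indep"
    and nr: "\<not> (\<exists>C. circuit S indep C \<and> rainbow P C)"
  shows "\<exists>A\<in>P. cut S indep A"
proof -
  let ?r = "matroid_rank S indep"
  note pb = part_basics[OF S(1) P]
  have finP: "finite P" using pb by simp
  have PS: "\<forall>A\<in>P. A \<subseteq> S \<and> A \<noteq> {}" using pb by simp
  have cov: "\<forall>x\<in>S. \<exists>A\<in>P. x \<in> A" using pb by simp
  have Pne: "P \<noteq> {}" using cov S(2) by auto
  have RI: "indep Y" if Y: "Y \<subseteq> S" "rainbow P Y" for Y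
  proof (rule ccontr)
    assume "\<not> indep Y"
    then obtain C where "C \<subseteq> Y" "circuit S indep C" using dep_has_circuit[OF M Y(1)] by blast
    moreover have "finite Y" using Y(1) S(1) finite_subset by blast
    ultimately show False using nr rainbow_mono Y(2) by blast
  qed
  define t where "t A = (SOME x. x \<in> A)" for A :: "'a set"
  have t: "\<forall>A\<in>P. t A \<in> A" using PS by (auto simp: t_def some_in_eq)
  have injt: "inj_on t P" using inj_image[OF P order_refl t] .
  define T where "T = t ` P"
  have TS: "T \<subseteq> S" using t PS by (auto simp: T_def)
  have indT: "indep T" using RI TS rainbow_image[OF P order_refl t] by (simp add: T_def)
  have cT: "card T = ?r" using card_image[OF injt] cP by (simp add: T_def)
  have gT: "gf2_lin_indep v T" using v TS indT by blast
  have finT: "finite T" using TS S(1) finite_subset by blast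
  have span: "\<forall>x\<in>S. \<exists>a. \<forall>i. v x i = (\<Sum>y\<in>T. a y * v y i)"
  proof
    fix x assume x: "x \<in> S"
    show "\<exists>a. \<forall>i. v x i = (\<Sum>y\<in>T. a y * v y i)"
    proof (cases "x \<in> T")
      case True
      have "\<forall>i. v x i = (\<Sum>y\<in>T. (\<lambda>y. if y = x then 1 else 0) y * v y i)"
        using True finT sum_ind[OF finT True] by simp
      thus ?thesis by (rule exI[of _ "\<lambda>y. if y = x then 1 else 0"])
    next
      case False
      have "card (insert x T) = ?r + 1" using False finT cT by simp
      hence "\<not> indep (insert x T)" using indep_card_le[OF M, of "insert x T"] by auto
      hence "\<not> gf2_lin_indep v (insert x T)" using v TS x by auto
      thus ?thesis using gf2_spanned[OF gT finT False] by blast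
    qed
  qed
  then obtain a where a: "\<forall>x\<in>S. \<forall>i. v x i = (\<Sum>y\<in>T. a x y * v y i)" by metis
  define c where "c x k = (if x \<in> T then (if x = t k then 1 else 0) else a x (t k))" for x k
  have ct: "\<forall>A\<in>P. \<forall>k\<in>P. c (t A) k = (if k = A then 1 else 0)"
    using injt by (auto simp: c_def T_def inj_on_def)
  have rep: "\<forall>x\<in>S. \<forall>i. v x i = (\<Sum>k\<in>P. c x k * v (t k) i)"
  proof (intro ballI allI)
    fix x i assume x: "x \<in> S"
    show "v x i = (\<Sum>k\<in>P. c x k * v (t k) i)"
    proof (cases "x \<in> T")
      case True
      then obtain A where A: "A \<in> P" "x = t A" by (auto simp: T_def)
      have "(\<Sum>k\<in>P. c x k * v (t k) i) = (\<Sum>k\<in>P. if k = A then v (t k) i else 0)"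
        apply (rule sum.cong[OF refl]) using ct A by auto
      also have "\<dots> = v x i" using A finP by simp
      finally show ?thesis by simp
    next
      case False
      have "v x i = (\<Sum>y\<in>T. a x y * v y i)" using a x by blast
      also have "\<dots> = (\<Sum>k\<in>P. a x (t k) * v (t k) i)"
        unfolding T_def using sum.reindex[OF injt] by simp
      finally show ?thesis using False by (simp add: c_def)
    qed
  qed
  have H: "HH P (\<lambda>A. A) c"
    unfolding HH_def
  proof (intro allI impI)
    fix y J assume y: "\<forall>A\<in>P. y A \<in> A" and J: "J \<subseteq> P \<and> J \<noteq> {}"
    show "\<exists>k\<in>P. (\<Sum>A\<in>J. c (y A) k) \<noteq> 0"
    proof (rule ccontr)
      assume "\<not> ?thesis"
      hence z: "\<forall>k\<in>P. (\<Sum>A\<in>J. c (y A) k) = 0" by blast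
      have yJ: "\<forall>A\<in>J. y A \<in> A" using y J by auto
      define Y where "Y = y ` J"
      have injy: "inj_on y J" using inj_image[OF P _ yJ] J by blast
      have YS: "Y \<subseteq> S" using yJ J PS by (auto simp: Y_def)
      have gY: "gf2_lin_indep v Y"
        using RI[OF YS] rainbow_image[OF P _ yJ] J v YS by (simp add: Y_def)
      have finJ: "finite J" using J finP finite_subset by blast
      have "(\<Sum>z\<in>Y. (\<lambda>_. 1::bit) z * v z i) = 0" for i
      proof -
        have "(\<Sum>z\<in>Y. (\<lambda>_. 1::bit) z * v z i) = (\<Sum>A\<in>J. v (y A) i)"
          unfolding Y_def using sum.reindex[OF injy] by simp
        also have "\<dots> = (\<Sum>A\<in>J. \<Sum>k\<in>P. c (y A) k * v (t k) i)"
          apply (rule sum.cong[OF refl]) using rep yJ J PS by blast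
        also have "\<dots> = (\<Sum>k\<in>P. \<Sum>A\<in>J. c (y A) k * v (t k) i)"
          by (rule sum.swap)
        also have "\<dots> = (\<Sum>k\<in>P. (\<Sum>A\<in>J. c (y A) k) * v (t k) i)"
          by (simp add: sum_distrib_right)
        also have "\<dots> = 0" using z by simp
        finally show ?thesis .
      qed
      hence "\<forall>z\<in>Y. (\<lambda>_. 1::bit) z = 0"
        using gY[unfolded gf2_lin_indep_def, THEN spec[of _ "\<lambda>_. 1::bit"]] by blast
      moreover have "Y \<noteq> {}" using J by (simp add: Y_def)
      ultimately show False by auto
    qed
  qed
  obtain i where i: "i \<in> P" "\<forall>j\<in>P-{i}. \<forall>x\<in>j. c x i = 0"
    using abs_main[OF finP Pne t ct H] by auto
  have "cut S indep i"
    unfolding cut_def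
  proof (intro conjI allI impI)
    show "i \<subseteq> S" using PS i by blast
  next
    fix B assume bB: "basis S indep B"
    show "i \<inter> B \<noteq> {}"
    proof
      assume iB: "i \<inter> B = {}"
      have B: "indep B" "card B = ?r" using basis_iff[OF M] bB by auto
      define T' where "T' = t ` (P - {i})"
      have injt': "inj_on t (P - {i})" using injt by (rule inj_on_subset) auto
      have T'T: "T' \<subseteq> T" by (auto simp: T'_def T_def)
      have iT': "indep T'" using indep_mono[OF M indT T'T] .
      have "card T' = card P - 1" using card_image[OF injt'] i finP by (simp add: T'_def)
      moreover have "card P > 0" using finP i by (auto simp: card_gt_0_iff)
      ultimately have "card T' < card B" using B cP by simp
      from augment[OF M iT' B(1) this] obtain w where w: "w \<in> B - T'" "indep (insert w T')" by blast
      have wS: "w \<in> S" using w indep_sub[OF M B(1)] by auto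
      have wi: "w \<notin> i" using w iB by auto
      obtain j where j: "j \<in> P" "w \<in> j" using cov wS by blast
      have ji: "j \<noteq> i" using j wi by auto
      have cwi: "c w i = 0" using i j ji by blast
      have wT: "w \<notin> T"
      proof
        assume "w \<in> T"
        then obtain k where k: "k \<in> P" "w = t k" by (auto simp: T_def)
        have "k \<noteq> i" using k t wi by auto
        hence "w \<in> T'" using k by (auto simp: T'_def)
        thus False using w by simp
      qed
      have "\<forall>i'. v w i' = (\<Sum>k\<in>P-{i}. c w k * v (t k) i')"
      proof
        fix i'
        have "v w i' = (\<Sum>k\<in>P. c w k * v (t k) i')" using rep wS by blast
        also have "\<dots> = c w i * v (t i) i' + (\<Sum>k\<in>P-{i}. c w k * v (t k) i')"
          using i finP by (intro sum.remove) auto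
        finally show "v w i' = (\<Sum>k\<in>P-{i}. c w k * v (t k) i')" using cwi by simp
      qed
      moreover have "gf2_lin_indep v (insert w T')"
        using v w(2) wS T'T TS by auto
      moreover have "w \<notin> t ` (P - {i})" using w by (simp add: T'_def)
      ultimately show False
        using gf2_not_rep[OF _ _ injt'] finP unfolding T'_def by blast
    qed
  next
    fix K' assume K': "K' \<subset> i"
    then obtain z where z: "z \<in> i" "z \<notin> K'" by blast
    define y where "y = t(i := z)"
    have y: "\<forall>A\<in>P. y A \<in> A" using t z by (auto simp: y_def)
    have injy: "inj_on y P" using inj_image[OF P order_refl y] .
    have B0S: "y ` P \<subseteq> S" using y PS by blast
    have "indep (y ` P)" using RI[OF B0S] rainbow_image[OF P order_refl y] by simp
    moreover have "card (y ` P) = ?r" using card_image[OF injy] cP by simp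
    ultimately have "basis S indep (y ` P)" using basis_iff[OF M] by simp
    moreover have "K' \<inter> y ` P = {}"
    proof (rule ccontr)
      assume "K' \<inter> y ` P \<noteq> {}"
      then obtain A where A: "A \<in> P" "y A \<in> K'" by blast
      have "y A \<in> i" using A K' by blast
      hence "A = i" using class_unique[OF P A(1) i(1)] y A by blast
      thus False using A z by (simp add: y_def)
    qed
    ultimately show "\<exists>B. basis S indep B \<and> K' \<inter> B = {}" by blast
  qed
  thus ?thesis using i by blast
qed



lemma part2:
  assumes M: "matroid S indep" and v: "\<forall>X. X \<subseteq> S \<longrightarrow> (indep X \<longleftrightarrow> gf2_lin_indep v X)"
    and S: "finite S" "S \<noteq> {}"
    and P: "partition_on S P" and cP: "card P = card S - matroid_rank S indep"
    and nr: "\<not> (\<exists>K. cut S indep K \<and> rainbow P K)"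
  shows "\<exists>A\<in>P. circuit S indep A"
proof -
  let ?r = "matroid_rank S indep"
  note pb = part_basics[OF S(1) P]
  have finP: "finite P" using pb by simp
  have PS: "\<forall>A\<in>P. A \<subseteq> S \<and> A \<noteq> {}" using pb by simp
  have cov: "\<forall>x\<in>S. \<exists>A\<in>P. x \<in> A" using pb by simp
  have Pne: "P \<noteq> {}" using cov S(2) by auto
  have RC: "\<exists>B. basis S indep B \<and> B \<inter> Y = {}" if Y: "Y \<subseteq> S" "rainbow P Y" for Y
  proof (rule ccontr)
    assume "\<not> ?thesis"
    hence "\<forall>B. basis S indep B \<longrightarrow> Y \<inter> B \<noteq> {}" by blast
    then obtain K where "K \<subseteq> Y" "cut S indep K" using meets_has_cut[OF M Y(1)] by blast
    moreover have "finite Y" using Y(1) S(1) finite_subset by blast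
    ultimately show False using nr rainbow_mono Y(2) by blast
  qed
  define t where "t A = (SOME x. x \<in> A)" for A :: "'a set"
  have t: "\<forall>A\<in>P. t A \<in> A" using PS by (auto simp: t_def some_in_eq)
  have injt: "inj_on t P" using inj_image[OF P order_refl t] .
  define T where "T = t ` P"
  have TS: "T \<subseteq> S" using t PS by (auto simp: T_def)
  have cT: "card T = card S - ?r" using card_image[OF injt] cP by (simp add: T_def)
  have finT: "finite T" using TS S(1) finite_subset by blast
  define B where "B = S - T"
  have rleS: "?r \<le> card S"
  proof -
    obtain X where X: "indep X" "card X = ?r" using rank_attained[OF M] by blast
    thus ?thesis using indep_sub[OF M X(1)] S(1) card_mono by metis
  qed
  have bB: "basis S indep B"
  proof -
    obtain B' where B': "basis S indep B'" "B' \<inter> T = {}"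
      using RC[OF TS] rainbow_image[OF P order_refl t] by (auto simp: T_def)
    have iB': "indep B'" "card B' = ?r" using basis_iff[OF M] B'(1) by auto
    have "B' \<subseteq> B" using indep_sub[OF M iB'(1)] B'(2) by (auto simp: B_def)
    moreover have "card B = ?r" using cT rleS TS S(1) by (simp add: B_def card_Diff_subset finT)
    moreover have "finite B" using S(1) by (simp add: B_def)
    ultimately have "B' = B" using iB' card_subset_eq by metis
    thus ?thesis using B' by simp
  qed
  have indB: "indep B" using bB by (simp add: basis_def)
  have BS: "B \<subseteq> S" by (auto simp: B_def)
  have gB: "gf2_lin_indep v B" using v indB BS by blast
  have finB: "finite B" using S(1) by (simp add: B_def)
  have gsub: "gf2_lin_indep v D" if "D \<subseteq> B" for D
    using v indep_mono[OF M indB that] that BS by auto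
  have span: "\<forall>x\<in>S. \<exists>a. \<forall>i. v x i = (\<Sum>y\<in>B. a y * v y i)"
  proof
    fix x assume x: "x \<in> S"
    show "\<exists>a. \<forall>i. v x i = (\<Sum>y\<in>B. a y * v y i)"
    proof (cases "x \<in> B")
      case True
      have "\<forall>i. v x i = (\<Sum>y\<in>B. (\<lambda>y. if y = x then 1 else 0) y * v y i)"
        using True finB sum_ind[OF finB True] by simp
      thus ?thesis by (rule exI[of _ "\<lambda>y. if y = x then 1 else 0"])
    next
      case False
      have "\<not> indep (insert x B)"
      proof
        assume "indep (insert x B)"
        hence "insert x B = B" using bB unfolding basis_def by blast
        thus False using False by auto
      qed
      hence "\<not> gf2_lin_indep v (insert x B)" using v BS x by auto
      thus ?thesis using gf2_spanned[OF gB finB False] by blast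
    qed
  qed
  then obtain d0 where d0: "\<forall>x\<in>S. \<forall>i. v x i = (\<Sum>y\<in>B. d0 x y * v y i)" by metis
  define d where "d x b = (if x \<in> B then (if b = x then 1 else 0) else d0 x b)" for x b
  have rep: "\<forall>x\<in>S. \<forall>i. v x i = (\<Sum>b\<in>B. d x b * v b i)"
  proof (intro ballI allI)
    fix x i assume x: "x \<in> S"
    show "v x i = (\<Sum>b\<in>B. d x b * v b i)"
    proof (cases "x \<in> B")
      case True
      have "(\<Sum>b\<in>B. d x b * v b i) = (\<Sum>b\<in>B. (if b = x then 1 else 0) * v b i)"
        using True by (simp add: d_def)
      also have "\<dots> = v x i" using sum_ind[OF finB True] .
      finally show ?thesis by simp
    next
      case False
      thus ?thesis using d0 x by (simp add: d_def)
    qed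
  qed
  have LIN: "(\<Sum>z\<in>Z. l z * (\<Sum>b\<in>W. d z b)) = 0"
    if Z: "Z \<subseteq> S" and W: "W \<subseteq> B" and rel: "\<forall>i. (\<Sum>z\<in>Z. l z * v z i) = 0" for Z W l
  proof -
    have finZ: "finite Z" using Z S(1) finite_subset by blast
    have "(\<Sum>b\<in>B. (\<Sum>z\<in>Z. l z * d z b) * v b i) = 0" for i
    proof -
      have "(\<Sum>b\<in>B. (\<Sum>z\<in>Z. l z * d z b) * v b i) = (\<Sum>b\<in>B. \<Sum>z\<in>Z. l z * (d z b * v b i))"
        by (simp add: sum_distrib_right mult.assoc)
      also have "\<dots> = (\<Sum>z\<in>Z. \<Sum>b\<in>B. l z * (d z b * v b i))" by (rule sum.swap)
      also have "\<dots> = (\<Sum>z\<in>Z. l z * v z i)"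
        apply (rule sum.cong[OF refl]) using rep Z by (auto simp: sum_distrib_left)
      finally show ?thesis using rel by simp
    qed
    hence "\<forall>b\<in>B. (\<Sum>z\<in>Z. l z * d z b) = 0"
      using gB[unfolded gf2_lin_indep_def, THEN spec[of _ "\<lambda>b. (\<Sum>z\<in>Z. l z * d z b)"]] by blast
    hence "(\<Sum>b\<in>W. \<Sum>z\<in>Z. l z * d z b) = 0" using W by (intro sum.neutral) auto
    thus ?thesis by (simp add: sum.swap[of _ W] sum_distrib_left)
  qed
  define c where "c x k = (if x \<in> T then (if x = t k then 1 else 0) else d (t k) x)" for x k
  have ct: "\<forall>A\<in>P. \<forall>k\<in>P. c (t A) k = (if k = A then 1 else 0)"
    using injt by (auto simp: c_def T_def inj_on_def)
  have H: "HH P (\<lambda>A. A) c"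
    unfolding HH_def
  proof (intro allI impI)
    fix y J assume y: "\<forall>A\<in>P. y A \<in> A" and J: "J \<subseteq> P \<and> J \<noteq> {}"
    show "\<exists>k\<in>P. (\<Sum>A\<in>J. c (y A) k) \<noteq> 0"
    proof (rule ccontr)
      assume "\<not> ?thesis"
      hence z: "\<forall>k\<in>P. (\<Sum>A\<in>J. c (y A) k) = 0" by blast
      have yJ: "\<forall>A\<in>J. y A \<in> A" using y J by auto
      define Y where "Y = y ` J"
      have injy: "inj_on y J" using inj_image[OF P _ yJ] J by blast
      have YS: "Y \<subseteq> S" using yJ J PS by (auto simp: Y_def)
      have rY: "rainbow P Y" using rainbow_image[OF P _ yJ] J by (simp add: Y_def)
      have finY: "finite Y" using YS S(1) finite_subset by blast
      define W where "W = B \<inter> Y"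
      have WB: "W \<subseteq> B" by (simp add: W_def)
      have finW: "finite W" using finB WB finite_subset by blast
      have split: "(\<Sum>z\<in>Y. c z k) = (\<Sum>b\<in>W. d (t k) b) + (if t k \<in> Y then 1 else 0)"
        if k: "k \<in> P" for k
      proof -
        have Yu: "Y = W \<union> (Y \<inter> T)" using YS by (auto simp: W_def B_def)
        have "(\<Sum>z\<in>W \<union> (Y \<inter> T). c z k) = (\<Sum>z\<in>W. c z k) + (\<Sum>z\<in>Y \<inter> T. c z k)"
          using finY finW by (intro sum.union_disjoint) (auto simp: W_def B_def)
        hence "(\<Sum>z\<in>Y. c z k) = (\<Sum>z\<in>W. c z k) + (\<Sum>z\<in>Y \<inter> T. c z k)" using Yu by simp
        also have "(\<Sum>z\<in>W. c z k) = (\<Sum>b\<in>W. d (t k) b)"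
          by (rule sum.cong) (auto simp: c_def W_def B_def)
        also have "(\<Sum>z\<in>Y \<inter> T. c z k) = (\<Sum>z\<in>Y \<inter> T. if z = t k then 1 else 0)"
          by (rule sum.cong) (auto simp: c_def)
        also have "\<dots> = (if t k \<in> Y \<inter> T then 1 else 0)" using finY by (simp add: sum.delta)
        finally show ?thesis using k by (simp add: T_def)
      qed
      have sY: "\<forall>k\<in>P. (\<Sum>z\<in>Y. c z k) = 0"
      proof
        fix k assume "k \<in> P"
        have "(\<Sum>z\<in>Y. c z k) = (\<Sum>A\<in>J. c (y A) k)"
          unfolding Y_def using sum.reindex[OF injy] by simp
        thus "(\<Sum>z\<in>Y. c z k) = 0" using z \<open>k \<in> P\<close> by simp
      qed
      have Wne: "W \<noteq> {}"
      proof
        assume W0: "W = {}"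
        obtain A where A: "A \<in> J" using J by blast
        have AP: "A \<in> P" using A J by blast
        have "y A \<in> T" using W0 YS A by (auto simp: W_def B_def Y_def)
        then obtain A' where A': "A' \<in> P" "y A = t A'" by (auto simp: T_def)
        have "A' = A" using class_unique[OF P A'(1) AP, of "y A"] t A' yJ A by auto
        hence "t A = y A" using A' by simp
        hence "t A \<in> Y" using A by (simp add: Y_def)
        with split[OF AP] sY AP W0 show False by auto
      qed
      have f0: "(\<Sum>b\<in>W. d x b) = 0" if x: "x \<in> S" "x \<notin> Y" for x
      proof (cases "x \<in> B")
        case True
        have "(\<Sum>b\<in>W. d x b) = (\<Sum>b\<in>W. if b = x then 1 else 0)" using True by (simp add: d_def)
        also have "\<dots> = 0" using x finW by (simp add: W_def)
        finally show ?thesis .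
      next
        case False
        then obtain k where k: "k \<in> P" "x = t k" using x by (auto simp: B_def T_def)
        show ?thesis using split[OF k(1)] sY k x by simp
      qed
      obtain B' where B': "basis S indep B'" "B' \<inter> Y = {}" using RC[OF YS rY] by blast
      have iB': "indep B'" using B' by (simp add: basis_def)
      have B'S: "B' \<subseteq> S" using indep_sub[OF M iB'] .
      have gB': "gf2_lin_indep v B'" using v iB' B'S by blast
      have finB': "finite B'" using B'S S(1) finite_subset by blast
      obtain b0 where b0: "b0 \<in> W" using Wne by blast
      have b0B': "b0 \<notin> B'" using b0 B'(2) by (auto simp: W_def)
      have b0S: "b0 \<in> S" using b0 BS by (auto simp: W_def)
      have "\<not> indep (insert b0 B')"
      proof
        assume "indep (insert b0 B')"
        hence "insert b0 B' = B'" using B'(1) unfolding basis_def by blast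
        thus False using b0B' by auto
      qed
      hence "\<not> gf2_lin_indep v (insert b0 B')" using v B'S b0S by auto
      then obtain l where l: "\<forall>i. (\<Sum>z\<in>insert b0 B'. l z * v z i) = 0" "\<exists>z\<in>insert b0 B'. l z \<noteq> 0"
        unfolding gf2_lin_indep_def by blast
      have "insert b0 B' \<subseteq> S" using B'S b0S by blast
      note L = LIN[OF this WB l(1)]
      have e1: "(\<Sum>z\<in>insert b0 B'. l z * (\<Sum>b\<in>W. d z b)) = l b0 * (\<Sum>b\<in>W. d b0 b) + (\<Sum>z\<in>B'. l z * (\<Sum>b\<in>W. d z b))"
        using finB' b0B' by simp
      have e2: "(\<Sum>z\<in>B'. l z * (\<Sum>b\<in>W. d z b)) = 0"
        by (rule sum.neutral) (use f0 B'S B'(2) in auto)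
      have e3: "(\<Sum>b\<in>W. d b0 b) = 1"
      proof -
        have "b0 \<in> B" using b0 by (simp add: W_def)
        hence "(\<Sum>b\<in>W. d b0 b) = (\<Sum>b\<in>W. if b = b0 then 1 else 0)" by (simp add: d_def)
        also have "\<dots> = 1" using b0 finW by simp
        finally show ?thesis .
      qed
      have lb0: "l b0 = 0" using L e1 e2 e3 by simp
      have "\<forall>i. (\<Sum>z\<in>B'. l z * v z i) = 0" using l(1) lb0 finB' b0B' by simp
      hence "\<forall>z\<in>B'. l z = 0" using gB'[unfolded gf2_lin_indep_def, THEN spec[of _ l]] by blast
      with l(2) lb0 show False by auto
    qed
  qed
  obtain i where i: "i \<in> P" "\<forall>j\<in>P-{i}. \<forall>x\<in>j. c x i = 0"
    using abs_main[OF finP Pne t ct H] by auto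
  have diag: "\<forall>x\<in>i. c x i = 1" using abs_diag[OF finP t ct H i(1)] by simp
  have iS: "i \<subseteq> S" using PS i(1) by blast
  have finI: "finite i" using iS S(1) finite_subset by blast
  have ti: "t i \<in> i" using t i(1) by blast
  have iT: "\<forall>x\<in>i. x \<in> T \<longleftrightarrow> x = t i"
  proof
    fix x assume x: "x \<in> i"
    show "x \<in> T \<longleftrightarrow> x = t i"
    proof
      assume "x \<in> T"
      then obtain A where A: "A \<in> P" "x = t A" by (auto simp: T_def)
      have "A = i" using class_unique[OF P A(1) i(1), of x] t A x by auto
      thus "x = t i" using A by simp
    qed (use i(1) in \<open>auto simp: T_def\<close>)
  qed
  have iB: "\<forall>x\<in>i. x \<noteq> t i \<longrightarrow> x \<in> B" using iT iS by (auto simp: B_def)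
  have dti: "\<forall>b\<in>B. d (t i) b = (if b \<in> i then 1 else 0)"
  proof
    fix b assume b: "b \<in> B"
    have cb: "c b i = d (t i) b" using b by (simp add: c_def B_def)
    show "d (t i) b = (if b \<in> i then 1 else 0)"
    proof (cases "b \<in> i")
      case True
      thus ?thesis using diag cb by simp
    next
      case False
      obtain j where j: "j \<in> P" "b \<in> j" using cov b BS by blast
      have "j \<noteq> i" using j False by auto
      hence "c b i = 0" using i(2) j by blast
      thus ?thesis using cb False by simp
    qed
  qed
  have tiS: "t i \<in> S" using ti iS by blast
  have "circuit S indep i" unfolding circuit_def
  proof (intro conjI allI impI)
    show "i \<subseteq> S" using iS .
    show "\<not> indep i"
    proof
      assume "indep i"
      hence gi: "gf2_lin_indep v i" using v iS by blast
      have "(\<Sum>z\<in>i. (\<lambda>_. 1::bit) z * v z j) = 0" for j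
      proof -
        have "v (t i) j = (\<Sum>b\<in>B. d (t i) b * v b j)" using rep tiS by blast
        also have "\<dots> = (\<Sum>b\<in>B. if b \<in> i then v b j else 0)" using dti by (intro sum.cong) auto
        also have "\<dots> = (\<Sum>b\<in>B \<inter> i. v b j)" using finB by (simp add: sum.inter_restrict)
        also have "B \<inter> i = i - {t i}" using iB ti iT by (auto simp: B_def)
        finally have e: "v (t i) j = (\<Sum>b\<in>i - {t i}. v b j)" .
        have "(\<Sum>z\<in>i. (\<lambda>_. 1::bit) z * v z j) = (\<Sum>z\<in>i. v z j)" by simp
        also have "\<dots> = v (t i) j + (\<Sum>z\<in>i-{t i}. v z j)" using sum.remove[OF finI ti] .
        finally show ?thesis using e by simp
      qed
      hence "\<forall>z\<in>i. (\<lambda>_. 1::bit) z = 0"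
        using gi[unfolded gf2_lin_indep_def, THEN spec[of _ "\<lambda>_. 1::bit"]] by blast
      thus False using ti by auto
    qed
  next
    fix D assume D: "D \<subset> i"
    show "indep D"
    proof (cases "t i \<in> D")
      case False
      hence "D \<subseteq> B" using D iB by auto
      thus ?thesis using indep_mono[OF M indB] by blast
    next
      case True
      obtain b0 where b0: "b0 \<in> i" "b0 \<notin> D" using D by blast
      have b0ne: "b0 \<noteq> t i" using b0 True by auto
      have b0B: "b0 \<in> B" using iB b0 b0ne by blast
      have DS: "D \<subseteq> S" using D iS by blast
      have finD: "finite D" using DS S(1) finite_subset by blast
      show ?thesis
      proof (rule ccontr)
        assume "\<not> indep D"
        hence "\<not> gf2_lin_indep v D" using v DS by auto
        then obtain l where l: "\<forall>j. (\<Sum>z\<in>D. l z * v z j) = 0" "\<exists>z\<in>D. l z \<noteq> 0"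
          unfolding gf2_lin_indep_def by blast
        have "{b0} \<subseteq> B" using b0B by simp
        note L = LIN[OF DS this l(1)]
        have e1: "(\<Sum>z\<in>D. l z * (\<Sum>b\<in>{b0}. d z b)) = l (t i) * d (t i) b0 + (\<Sum>z\<in>D-{t i}. l z * d z b0)"
          using sum.remove[OF finD True, of "\<lambda>z. l z * (\<Sum>b\<in>{b0}. d z b)"] by simp
        have e2: "(\<Sum>z\<in>D-{t i}. l z * d z b0) = 0"
          by (rule sum.neutral) (use D iB b0 in \<open>auto simp: d_def\<close>)
        have e3: "d (t i) b0 = 1" using dti b0B b0 by simp
        have lt: "l (t i) = 0" using L e1 e2 e3 by simp
        have "\<forall>j. (\<Sum>z\<in>D-{t i}. l z * v z j) = 0"
        proof
          fix j
          have "(\<Sum>z\<in>D. l z * v z j) = l (t i) * v (t i) j + (\<Sum>z\<in>D-{t i}. l z * v z j)"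
            using sum.remove[OF finD True] .
          thus "(\<Sum>z\<in>D-{t i}. l z * v z j) = 0" using l(1) lt by simp
        qed
        moreover have "D - {t i} \<subseteq> B" using D iB by auto
        ultimately have "\<forall>z\<in>D-{t i}. l z = 0"
          using gsub[of "D - {t i}", unfolded gf2_lin_indep_def, THEN spec[of _ l]] by blast
        with lt l(2) show False by (metis DiffI singletonD zero_neq_one)
      qed
    qed
  qed
  thus ?thesis using i by blast
qed


theorem corollary2:
  fixes S :: "'a set" and indep :: "'a set \<Rightarrow> bool"
  assumes "finite S" and "S \<noteq> {}"
    and "matroid S indep" and "binary_matroid S indep" and "loopless S indep"
  shows "(\<forall>P. partition_on S P \<and> card P = matroid_rank S indep
              \<and> \<not> (\<exists>C. circuit S indep C \<and> rainbow P C)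
            \<longrightarrow> (\<exists>A\<in>P. cut S indep A))
       \<and> (\<forall>P. partition_on S P \<and> card P = card S - matroid_rank S indep
              \<and> \<not> (\<exists>K. cut S indep K \<and> rainbow P K)
            \<longrightarrow> (\<exists>A\<in>P. circuit S indep A))"
proof -
  obtain v :: "'a \<Rightarrow> nat \<Rightarrow> bit" where v: "\<forall>X. X \<subseteq> S \<longrightarrow> (indep X \<longleftrightarrow> gf2_lin_indep v X)"
    using assms(4) unfolding binary_matroid_def by blast
  show ?thesis
    using part1[OF assms(3) v assms(1,2)] part2[OF assms(3) v assms(1,2)] by blast
qed

end
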